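(* Let $\varkappa\colon(P,\mathfrak p,k)\to(R,\mathfrak m,k)$ be a surjective homomorphism of local rings, let $\mathcal D$ be a minimal free resolution of $k$ over $P$ with a graded-commutative DG algebra structure, and let $\mathcal A=\mathcal D\otimes_PR$. Suppose there is a positive integer $a$ such that (1) the map $\operatorname{Tor}_i^P(R,k)\to\operatorname{Tor}_i^P(R/\mathfrak m^a,k)$ induced by the projection $R\to R/\mathfrak m^a$ is zero for all $i>0$; (2) the map $\operatorname{Tor}_i^P(\mathfrak m^{2a},k)\to\operatorname{Tor}_i^P(\mathfrak m^a,k)$ induced by the inclusion $\mathfrak m^{2a}\subseteq\mathfrak m^a$ is zero for all $i\ge0$. Then $\varkappa$ is a Golod homomorphism. Furthermore, the trivial Massey operation $\mu$ can be constructed so that its image is contained in $\mathfrak m^a\mathcal A$.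
   Context: For $x\in\mathcal A$ put $\bar x=(-1)^{|x|+1}x$; let $\mathbf h$ be a homogeneous $k$-basis of $H_{\ge1}(\mathcal A)$. A trivial Massey operation is a function $\mu\colon\bigsqcup_{n\ge1}\mathbf h^n\to\mathcal A$ such that $\mu(h)$ is a cycle in the class $h$ for each $h\in\mathbf h$; $\partial\mu(h_1,\dots,h_n)=\sum_{i=1}^{n-1}\overline{\mu(h_1,\dots,h_i)}\mu(h_{i+1},\dots,h_n)$ for $n\ge2$; and $\mu(\mathbf h^n)\subseteq\mathfrak m\mathcal A$ for all $n\ge1$. The homomorphism $\varkappa$ is called Golod if $\mathcal A$ admits a trivial Massey operation. *)

theory Defs
  imports Main
begin

definition is_ideal :: "'a::comm_ring_1 set \<Rightarrow> bool" where
  "is_ideal I \<longleftrightarrow> 0 \<in> I \<and> (\<forall>x\<in>I. \<forall>y\<in>I. x + y \<in> I) \<and> (\<forall>r x. x \<in> I \<longrightarrow> r * x \<in> I)"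

definition ideal_gen :: "'a::comm_ring_1 set \<Rightarrow> 'a set" where
  "ideal_gen S = \<Inter>{I. is_ideal I \<and> S \<subseteq> I}"

definition ideal_prod :: "'a::comm_ring_1 set \<Rightarrow> 'a set \<Rightarrow> 'a set" where
  "ideal_prod I J = ideal_gen {x * y | x y. x \<in> I \<and> y \<in> J}"

fun ideal_pow :: "'a::comm_ring_1 set \<Rightarrow> nat \<Rightarrow> 'a set" where
  "ideal_pow I 0 = UNIV"
| "ideal_pow I (Suc n) = ideal_prod I (ideal_pow I n)"

definition maximal_ideal :: "'a::comm_ring_1 set \<Rightarrow> bool" where
  "maximal_ideal M \<longleftrightarrow> is_ideal M \<and> M \<noteq> UNIV \<and>
     (\<forall>J. is_ideal J \<and> M \<subseteq> J \<longrightarrow> J = M \<or> J = UNIV)"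

definition noetherian_ring :: "'a::comm_ring_1 itself \<Rightarrow> bool" where
  "noetherian_ring _ \<longleftrightarrow> (\<forall>I::'a set. is_ideal I \<longrightarrow> (\<exists>S. finite S \<and> I = ideal_gen S))"

definition local_ring :: "'a::comm_ring_1 set \<Rightarrow> bool" where
  "local_ring M \<longleftrightarrow> noetherian_ring TYPE('a) \<and> maximal_ideal M \<and>
     (\<forall>J. maximal_ideal J \<longrightarrow> J = M)"

definition ring_hom :: "('a::comm_ring_1 \<Rightarrow> 'b::comm_ring_1) \<Rightarrow> bool" where
  "ring_hom f \<longleftrightarrow> f 1 = 1 \<and> (\<forall>x y. f (x + y) = f x + f y) \<and> (\<forall>x y. f (x * y) = f x * f y)"

text \<open>The degree-i component of a graded free module with ranks b is modelled as
  the coordinate vectors \<open>vec (b i)\<close>: functions nat => ring vanishing from index b i on.\<close>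

definition vec :: "nat \<Rightarrow> (nat \<Rightarrow> 'a::zero) set" where
  "vec n = {v. \<forall>j\<ge>n. v j = 0}"

definition vzero :: "nat \<Rightarrow> 'a::zero" where "vzero = (\<lambda>_. 0)"

definition vadd :: "(nat \<Rightarrow> 'a::comm_ring_1) \<Rightarrow> (nat \<Rightarrow> 'a) \<Rightarrow> nat \<Rightarrow> 'a" where
  "vadd x y = (\<lambda>s. x s + y s)"

definition vsub :: "(nat \<Rightarrow> 'a::comm_ring_1) \<Rightarrow> (nat \<Rightarrow> 'a) \<Rightarrow> nat \<Rightarrow> 'a" where
  "vsub x y = (\<lambda>s. x s - y s)"

definition smult :: "'a::comm_ring_1 \<Rightarrow> (nat \<Rightarrow> 'a) \<Rightarrow> nat \<Rightarrow> 'a" where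
  "smult r v = (\<lambda>s. r * v s)"

text \<open>Differential \<open>\<partial>_i : F_i \<rightarrow> F_{i-1}\<close> given by matrices \<open>d i s t\<close>
  (row s < b (i-1), column t < b i); \<open>\<partial>_0 = 0\<close>.\<close>
definition cdiff :: "(nat \<Rightarrow> nat) \<Rightarrow> (nat \<Rightarrow> nat \<Rightarrow> nat \<Rightarrow> 'a::comm_ring_1) \<Rightarrow> nat \<Rightarrow> (nat \<Rightarrow> 'a) \<Rightarrow> nat \<Rightarrow> 'a" where
  "cdiff b d i v = (\<lambda>s. if i = 0 \<or> b (i - 1) \<le> s then 0 else (\<Sum>t<b i. d i s t * v t))"

text \<open>Bilinear multiplication \<open>F_i \<times> F_j \<rightarrow> F_{i+j}\<close> given by structure constants
  \<open>e_s e_t = \<Sum>_u c i j s t u e_u\<close>.\<close>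
definition cmult :: "(nat \<Rightarrow> nat) \<Rightarrow> (nat \<Rightarrow> nat \<Rightarrow> nat \<Rightarrow> nat \<Rightarrow> nat \<Rightarrow> 'a::comm_ring_1)
    \<Rightarrow> nat \<Rightarrow> nat \<Rightarrow> (nat \<Rightarrow> 'a) \<Rightarrow> (nat \<Rightarrow> 'a) \<Rightarrow> nat \<Rightarrow> 'a" where
  "cmult b c i j x y = (\<lambda>u. if b (i + j) \<le> u then 0
      else (\<Sum>s<b i. \<Sum>t<b j. c i j s t u * x s * y t))"

definition min_dga_resolution ::
  "'p::comm_ring_1 set \<Rightarrow> (nat \<Rightarrow> nat) \<Rightarrow> (nat \<Rightarrow> nat \<Rightarrow> nat \<Rightarrow> 'p) \<Rightarrow> (nat \<Rightarrow> nat \<Rightarrow> nat \<Rightarrow> nat \<Rightarrow> nat \<Rightarrow> 'p) \<Rightarrow> bool"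
  where
  "min_dga_resolution p b d c \<longleftrightarrow>
     \<comment> \<open>resolution of k = P/p: D_0 = P, image of \<partial>_1 is p, complex, exact in degrees \<ge> 1\<close>
     b 0 = 1 \<and>
     {cdiff b d 1 w 0 | w. w \<in> vec (b 1)} = p \<and>
     (\<forall>i. \<forall>v\<in>vec (b (Suc i)). cdiff b d i (cdiff b d (Suc i) v) = vzero) \<and>
     (\<forall>i\<ge>1. \<forall>v\<in>vec (b i). cdiff b d i v = vzero \<longrightarrow>
        (\<exists>w\<in>vec (b (Suc i)). cdiff b d (Suc i) w = v)) \<and>
     \<comment> \<open>minimality: \<partial>(D) \<subseteq> pD\<close>
     (\<forall>i\<ge>1. \<forall>s<b (i - 1). \<forall>t<b i. d i s t \<in> p) \<and>
     \<comment> \<open>unital\<close>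
     (\<exists>e\<in>vec (b 0). \<forall>j. \<forall>y\<in>vec (b j). cmult b c 0 j e y = y \<and> cmult b c j 0 y e = y) \<and>
     \<comment> \<open>associative\<close>
     (\<forall>i j l. \<forall>x\<in>vec (b i). \<forall>y\<in>vec (b j). \<forall>z\<in>vec (b l).
        cmult b c (i + j) l (cmult b c i j x y) z = cmult b c i (j + l) x (cmult b c j l y z)) \<and>
     \<comment> \<open>graded-commutative (strictly: odd elements square to zero)\<close>
     (\<forall>i j. \<forall>x\<in>vec (b i). \<forall>y\<in>vec (b j).
        cmult b c i j x y = smult ((-1) ^ (i * j)) (cmult b c j i y x)) \<and>
     (\<forall>i. odd i \<longrightarrow> (\<forall>x\<in>vec (b i). cmult b c i i x x = vzero)) \<and>
     \<comment> \<open>Leibniz rule\<close>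
     (\<forall>i j. \<forall>x\<in>vec (b i). \<forall>y\<in>vec (b j).
        cdiff b d (i + j) (cmult b c i j x y) =
          vadd (cmult b c (i - 1) j (cdiff b d i x) y)
               (smult ((-1) ^ i) (cmult b c i (j - 1) x (cdiff b d j y))))"

definition boundaries :: "(nat \<Rightarrow> nat) \<Rightarrow> (nat \<Rightarrow> nat \<Rightarrow> nat \<Rightarrow> 'a::comm_ring_1) \<Rightarrow> nat \<Rightarrow> (nat \<Rightarrow> 'a) set" where
  "boundaries b d i = cdiff b d (Suc i) ` vec (b (Suc i))"

definition hclass :: "(nat \<Rightarrow> nat) \<Rightarrow> (nat \<Rightarrow> nat \<Rightarrow> nat \<Rightarrow> 'a::comm_ring_1) \<Rightarrow> nat \<Rightarrow> (nat \<Rightarrow> 'a) set \<Rightarrow> bool" where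
  "hclass b d i C \<longleftrightarrow> (\<exists>z\<in>vec (b i). cdiff b d i z = vzero \<and> C = vadd z ` boundaries b d i)"

text \<open>H is a homogeneous k-basis (k = R/m) of H_{\<ge>1}; elements are pairs (degree, class).\<close>
definition hbasis :: "(nat \<Rightarrow> nat) \<Rightarrow> (nat \<Rightarrow> nat \<Rightarrow> nat \<Rightarrow> 'a::comm_ring_1) \<Rightarrow> 'a set
    \<Rightarrow> (nat \<times> (nat \<Rightarrow> 'a) set) set \<Rightarrow> bool" where
  "hbasis b d m H \<longleftrightarrow>
     (\<forall>h\<in>H. fst h \<ge> 1 \<and> hclass b d (fst h) (snd h)) \<and>
     (\<forall>i F r zs. finite F \<and> F \<subseteq> {h\<in>H. fst h = i} \<and> (\<forall>h\<in>F. zs h \<in> snd h) \<and>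
        (\<lambda>s. \<Sum>h\<in>F. r h * zs h s) \<in> boundaries b d i \<longrightarrow> (\<forall>h\<in>F. r h \<in> m)) \<and>
     (\<forall>i\<ge>1. \<forall>z\<in>vec (b i). cdiff b d i z = vzero \<longrightarrow>
        (\<exists>F r zs. finite F \<and> F \<subseteq> {h\<in>H. fst h = i} \<and> (\<forall>h\<in>F. zs h \<in> snd h) \<and>
           vsub z (\<lambda>s. \<Sum>h\<in>F. r h * zs h s) \<in> boundaries b d i))"

text \<open>Degree of \<open>\<mu>(h_1,...,h_n)\<close>: \<open>|h_1| + ... + |h_n| + n - 1\<close>.\<close>
definition mdeg :: "(nat \<times> 'c) list \<Rightarrow> nat" where
  "mdeg hs = sum_list (map fst hs) + length hs - 1"

definition trivial_massey :: "(nat \<Rightarrow> nat) \<Rightarrow> (nat \<Rightarrow> nat \<Rightarrow> nat \<Rightarrow> 'a::comm_ring_1)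
    \<Rightarrow> (nat \<Rightarrow> nat \<Rightarrow> nat \<Rightarrow> nat \<Rightarrow> nat \<Rightarrow> 'a) \<Rightarrow> 'a set
    \<Rightarrow> (nat \<times> (nat \<Rightarrow> 'a) set) set \<Rightarrow> ((nat \<times> (nat \<Rightarrow> 'a) set) list \<Rightarrow> nat \<Rightarrow> 'a) \<Rightarrow> bool" where
  "trivial_massey b d c m H \<mu> \<longleftrightarrow>
     (\<forall>hs. hs \<noteq> [] \<and> set hs \<subseteq> H \<longrightarrow> \<mu> hs \<in> vec (b (mdeg hs)) \<and> (\<forall>s. \<mu> hs s \<in> m)) \<and>
     (\<forall>h\<in>H. \<mu> [h] \<in> snd h) \<and>
     (\<forall>hs. length hs \<ge> 2 \<and> set hs \<subseteq> H \<longrightarrow>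
        cdiff b d (mdeg hs) (\<mu> hs) =
          (\<lambda>s. \<Sum>i\<in>{1..<length hs}.
             cmult b c (mdeg (take i hs)) (mdeg (drop i hs))
               (smult ((-1) ^ (mdeg (take i hs) + 1)) (\<mu> (take i hs))) (\<mu> (drop i hs)) s))"

definition golod :: "(nat \<Rightarrow> nat) \<Rightarrow> (nat \<Rightarrow> nat \<Rightarrow> nat \<Rightarrow> 'a::comm_ring_1)
    \<Rightarrow> (nat \<Rightarrow> nat \<Rightarrow> nat \<Rightarrow> nat \<Rightarrow> nat \<Rightarrow> 'a) \<Rightarrow> 'a set \<Rightarrow> bool" where
  "golod b d c m \<longleftrightarrow> (\<exists>H. hbasis b d m H \<and> (\<exists>\<mu>. trivial_massey b d c m H \<mu>))"

text \<open>Tor_i^P(R,k) \<rightarrow> Tor_i^P(R/m^a,k) is zero for all i > 0: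
  every cycle of A_i is a boundary modulo m^a A.\<close>
definition tor_cond1 :: "(nat \<Rightarrow> nat) \<Rightarrow> (nat \<Rightarrow> nat \<Rightarrow> nat \<Rightarrow> 'a::comm_ring_1) \<Rightarrow> 'a set \<Rightarrow> nat \<Rightarrow> bool" where
  "tor_cond1 b d m a \<longleftrightarrow>
     (\<forall>i>0. \<forall>z\<in>vec (b i). cdiff b d i z = vzero \<longrightarrow>
        (\<exists>w\<in>vec (b (Suc i)). \<forall>s. z s - cdiff b d (Suc i) w s \<in> ideal_pow m a))"

text \<open>Tor_i^P(m^{2a},k) \<rightarrow> Tor_i^P(m^a,k) is zero for all i \<ge> 0, using
  D \<otimes>_P I = I-valued vectors of A (D is free).\<close>
definition tor_cond2 :: "(nat \<Rightarrow> nat) \<Rightarrow> (nat \<Rightarrow> nat \<Rightarrow> nat \<Rightarrow> 'a::comm_ring_1) \<Rightarrow> 'a set \<Rightarrow> nat \<Rightarrow> bool" where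
  "tor_cond2 b d m a \<longleftrightarrow>
     (\<forall>i. \<forall>z\<in>vec (b i). (\<forall>s. z s \<in> ideal_pow m (2 * a)) \<and> cdiff b d i z = vzero \<longrightarrow>
        (\<exists>w\<in>vec (b (Suc i)). (\<forall>s. w s \<in> ideal_pow m a) \<and> cdiff b d (Suc i) w = z))"

end

theory Submission
  imports Defs
begin

lemma cdiff_vadd: "cdiff b d i (vadd x y) = vadd (cdiff b d i x) (cdiff b d i y)"
  by (auto simp: cdiff_def vadd_def distrib_left sum.distrib fun_eq_iff)

lemma cdiff_smult: "cdiff b d i (smult r x) = smult r (cdiff b d i x)"
  by (auto simp: cdiff_def smult_def sum_distrib_left fun_eq_iff mult_ac)

lemma cdiff_sum: "cdiff b d i (\<lambda>s. \<Sum>k\<in>K. g k s) = (\<lambda>s. \<Sum>k\<in>K. cdiff b d i (g k) s)"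
  by (auto simp: cdiff_def sum_distrib_left fun_eq_iff intro: sum.swap)

lemma cdiff_zero: "cdiff b d i (\<lambda>s. 0) = vzero"
  by (auto simp: cdiff_def vzero_def fun_eq_iff)

lemma cmult_smult_left: "cmult b c i j (smult r x) y = smult r (cmult b c i j x y)"
  by (auto simp: cmult_def smult_def sum_distrib_left fun_eq_iff mult_ac)

lemma cmult_smult_right: "cmult b c i j x (smult r y) = smult r (cmult b c i j x y)"
  by (auto simp: cmult_def smult_def sum_distrib_left fun_eq_iff mult_ac)

lemma cmult_vadd_left: "cmult b c i j (vadd x x') y = vadd (cmult b c i j x y) (cmult b c i j x' y)"
  by (auto simp: cmult_def vadd_def distrib_left distrib_right sum.distrib fun_eq_iff)

lemma cmult_vadd_right: "cmult b c i j x (vadd y y') = vadd (cmult b c i j x y) (cmult b c i j x y')"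
  by (auto simp: cmult_def vadd_def distrib_left distrib_right sum.distrib fun_eq_iff)

lemma cmult_sum_left: "cmult b c i j (\<lambda>s. \<Sum>k\<in>K. g k s) y = (\<lambda>u. \<Sum>k\<in>K. cmult b c i j (g k) y u)"
proof -
  have "(\<Sum>s<b i. \<Sum>t<b j. c i j s t u * (\<Sum>k\<in>K. g k s) * y t) =
        (\<Sum>k\<in>K. \<Sum>s<b i. \<Sum>t<b j. c i j s t u * g k s * y t)" for u
    by (simp add: sum_distrib_left sum_distrib_right mult_ac sum.swap[of _ K] )
  then show ?thesis by (auto simp: cmult_def fun_eq_iff)
qed

lemma cmult_sum_right: "cmult b c i j x (\<lambda>s. \<Sum>k\<in>K. g k s) = (\<lambda>u. \<Sum>k\<in>K. cmult b c i j x (g k) u)"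
proof -
  have "(\<Sum>s<b i. \<Sum>t<b j. c i j s t u * x s * (\<Sum>k\<in>K. g k t)) =
        (\<Sum>k\<in>K. \<Sum>s<b i. \<Sum>t<b j. c i j s t u * x s * g k t)" for u
    by (simp add: sum_distrib_left sum_distrib_right mult_ac sum.swap[of _ K] )
  then show ?thesis by (auto simp: cmult_def fun_eq_iff)
qed

lemma cmult_zero_left: "cmult b c i j (\<lambda>s. 0) y = vzero"
  by (auto simp: cmult_def vzero_def fun_eq_iff)
lemma cmult_zero_right: "cmult b c i j x (\<lambda>s. 0) = vzero"
  by (auto simp: cmult_def vzero_def fun_eq_iff)

lemma cmult_vec: "cmult b c i j x y \<in> vec (b (i + j))"
  by (auto simp: cmult_def vec_def)
lemma cdiff_vec: "cdiff b d (Suc i) x \<in> vec (b i)"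
  by (auto simp: cdiff_def vec_def)
lemma smult_vec: "x \<in> vec n \<Longrightarrow> smult r x \<in> vec n"
  by (auto simp: smult_def vec_def)
lemma vadd_vec: "x \<in> vec n \<Longrightarrow> y \<in> vec n \<Longrightarrow> vadd x y \<in> vec n"
  by (auto simp: vadd_def vec_def)



lemma is_idealD: assumes "is_ideal I"
  shows "0 \<in> I" "x \<in> I \<Longrightarrow> y \<in> I \<Longrightarrow> x + y \<in> I" "x \<in> I \<Longrightarrow> r * x \<in> I"
    "x \<in> I \<Longrightarrow> x * r \<in> I" "x \<in> I \<Longrightarrow> - x \<in> I" "x \<in> I \<Longrightarrow> y \<in> I \<Longrightarrow> x - y \<in> I"
proof -
  show "x \<in> I \<Longrightarrow> x * r \<in> I" using assms by (metis is_ideal_def mult.commute)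
  show "x \<in> I \<Longrightarrow> - x \<in> I" using assms unfolding is_ideal_def by (metis mult_minus1)
  then show "x \<in> I \<Longrightarrow> y \<in> I \<Longrightarrow> x - y \<in> I" using assms unfolding is_ideal_def
    by (metis diff_conv_add_uminus mult_minus1)
qed (use assms in \<open>auto simp: is_ideal_def\<close>)

lemma ideal_sum: "is_ideal I \<Longrightarrow> (\<And>k. k \<in> K \<Longrightarrow> f k \<in> I) \<Longrightarrow> sum f K \<in> I"
  by (induction K rule: infinite_finite_induct) (auto dest: is_idealD)

lemma ideal_gen_ideal: "is_ideal (ideal_gen S)"
  by (auto simp: ideal_gen_def is_ideal_def)

lemma ideal_gen_sub: "S \<subseteq> ideal_gen S"
  by (auto simp: ideal_gen_def)

lemma ideal_gen_least: "is_ideal I \<Longrightarrow> S \<subseteq> I \<Longrightarrow> ideal_gen S \<subseteq> I"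
  by (auto simp: ideal_gen_def)

lemma ideal_UNIV: "is_ideal UNIV"
  by (auto simp: is_ideal_def)

lemma ideal_pow_ideal: "is_ideal (ideal_pow I k)"
  by (cases k) (auto simp: ideal_UNIV ideal_prod_def ideal_gen_ideal)

lemma ideal_pow_mult:
  assumes m: "is_ideal m"
  shows "x \<in> ideal_pow m i \<Longrightarrow> y \<in> ideal_pow m j \<Longrightarrow> x * y \<in> ideal_pow m (i + j)"
proof (induction i arbitrary: x y)
  case 0
  then show ?case using ideal_pow_ideal is_idealD(3) by fastforce
next
  case (Suc n)
  let ?J = "{x. \<forall>y \<in> ideal_pow m j. x * y \<in> ideal_pow m (Suc n + j)}"
  have J: "is_ideal ?J"
    using is_idealD[OF ideal_pow_ideal[of m "Suc n + j"]]
    unfolding is_ideal_def by (auto simp: distrib_right mult.assoc)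
  have "{x * y |x y. x \<in> m \<and> y \<in> ideal_pow m n} \<subseteq> ?J"
  proof clarify
    fix u v w assume "u \<in> m" "v \<in> ideal_pow m n" "w \<in> ideal_pow m j"
    then have "v * w \<in> ideal_pow m (n + j)" using Suc.IH by blast
    then have "u * (v * w) \<in> ideal_pow m (Suc (n + j))"
      using \<open>u \<in> m\<close> ideal_gen_sub by (fastforce simp: ideal_prod_def)
    then show "u * v * w \<in> ideal_pow m (Suc n + j)" by (simp add: mult.assoc)
  qed
  then have "ideal_pow m (Suc n) \<subseteq> ?J"
    unfolding ideal_pow.simps ideal_prod_def by (rule ideal_gen_least[OF J])
  then show ?case using Suc.prems by blast
qed

lemma ideal_pow_sub: assumes "is_ideal m" "a > 0" shows "ideal_pow m a \<subseteq> m"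
proof -
  obtain n where a: "a = Suc n" using assms(2) by (cases a) auto
  have "{x * y |x y. x \<in> m \<and> y \<in> ideal_pow m n} \<subseteq> m"
    using is_idealD(4)[OF assms(1)] by auto
  then show ?thesis unfolding a by (simp add: ideal_prod_def ideal_gen_least[OF assms(1)])
qed



locale gsetup =
  fixes \<kappa> :: "'p::comm_ring_1 \<Rightarrow> 'r::comm_ring_1" and p :: "'p set" and m :: "'r set"
    and b :: "nat \<Rightarrow> nat" and d :: "nat \<Rightarrow> nat \<Rightarrow> nat \<Rightarrow> 'p"
    and c :: "nat \<Rightarrow> nat \<Rightarrow> nat \<Rightarrow> nat \<Rightarrow> nat \<Rightarrow> 'p"
  assumes P_local: "local_ring p" and R_local: "local_ring m" and hom: "ring_hom \<kappa>"
    and surj: "surj \<kappa>" and local_hom: "\<kappa> ` p \<subseteq> m" and D: "min_dga_resolution p b d c"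
begin

abbreviation "dA \<equiv> (\<lambda>i s t. \<kappa> (d i s t))"
abbreviation "cA \<equiv> (\<lambda>i j s t u. \<kappa> (c i j s t u))"

lemma k_add: "\<kappa> (x + y) = \<kappa> x + \<kappa> y" and k_mult: "\<kappa> (x * y) = \<kappa> x * \<kappa> y"
  and k_one: "\<kappa> 1 = 1"
  using hom by (auto simp: ring_hom_def)

lemma k_zero: "\<kappa> 0 = 0"
  using k_add[of 0 0] by simp

lemma k_neg: "\<kappa> (- x) = - \<kappa> x"
proof -
  have "\<kappa> x + \<kappa> (- x) = 0" using k_add[of x "- x"] k_zero by simp
  then have "- \<kappa> x = \<kappa> (- x)" by (rule minus_unique)
  then show ?thesis by simp
qed

lemma k_diff: "\<kappa> (x - y) = \<kappa> x - \<kappa> y"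
  using k_add[of x "- y"] k_neg by simp

lemma k_sum: "\<kappa> (sum f K) = (\<Sum>k\<in>K. \<kappa> (f k))"
  by (induction K rule: infinite_finite_induct) (auto simp: k_zero k_add)

lemma k_pow: "\<kappa> (x ^ n) = \<kappa> x ^ n"
  by (induction n) (auto simp: k_one k_mult)

lemma k_m1: "\<kappa> ((-1) ^ n) = (-1) ^ n"
  by (simp add: k_pow k_neg k_one)

lemma lift: assumes "z \<in> vec n" shows "\<exists>z'\<in>vec n. (\<lambda>s. \<kappa> (z' s)) = z"
proof -
  define z' where "z' = (\<lambda>s. if z s = 0 then 0 else inv \<kappa> (z s))"
  have "(\<lambda>s. \<kappa> (z' s)) = z" using surj by (auto simp: z'_def fun_eq_iff k_zero surj_f_inv_f)
  moreover have "z' \<in> vec n" using assms by (auto simp: z'_def vec_def)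
  ultimately show ?thesis by blast
qed

lemma hom_cdiff: "(\<lambda>s. \<kappa> (cdiff b d i x s)) = cdiff b dA i (\<lambda>s. \<kappa> (x s))"
  by (auto simp: cdiff_def fun_eq_iff k_zero k_sum k_mult)

lemma hom_cmult: "(\<lambda>s. \<kappa> (cmult b c i j x y s)) = cmult b cA i j (\<lambda>s. \<kappa> (x s)) (\<lambda>s. \<kappa> (y s))"
  by (auto simp: cmult_def fun_eq_iff k_zero k_sum k_mult)

lemma hom_vadd: "(\<lambda>s. \<kappa> (vadd x y s)) = vadd (\<lambda>s. \<kappa> (x s)) (\<lambda>s. \<kappa> (y s))"
  by (auto simp: vadd_def k_add)

lemma hom_smult: "(\<lambda>s. \<kappa> (smult r x s)) = smult (\<kappa> r) (\<lambda>s. \<kappa> (x s))"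
  by (auto simp: smult_def k_mult)

lemma hom_vzero: "(\<lambda>s. \<kappa> (vzero s)) = vzero"
  by (auto simp: vzero_def k_zero)

lemma dd_A: assumes "v \<in> vec (b (Suc i))"
  shows "cdiff b dA i (cdiff b dA (Suc i) v) = vzero"
proof -
  obtain v' where v': "v' \<in> vec (b (Suc i))" "(\<lambda>s. \<kappa> (v' s)) = v" using lift assms by blast
  have "cdiff b d i (cdiff b d (Suc i) v') = vzero" using D v'(1) by (simp add: min_dga_resolution_def)
  then have "(\<lambda>s. \<kappa> (cdiff b d i (cdiff b d (Suc i) v') s)) = (\<lambda>s. \<kappa> (vzero s))" by simp
  then show ?thesis by (simp only: hom_cdiff hom_vzero v'(2))
qed

lemma leib_A: assumes "x \<in> vec (b i)" "y \<in> vec (b j)"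
  shows "cdiff b dA (i + j) (cmult b cA i j x y) =
          vadd (cmult b cA (i - 1) j (cdiff b dA i x) y)
               (smult ((-1) ^ i) (cmult b cA i (j - 1) x (cdiff b dA j y)))"
proof -
  obtain x' where x': "x' \<in> vec (b i)" "(\<lambda>s. \<kappa> (x' s)) = x" using lift assms by blast
  obtain y' where y': "y' \<in> vec (b j)" "(\<lambda>s. \<kappa> (y' s)) = y" using lift assms by blast
  have "cdiff b d (i + j) (cmult b c i j x' y') =
          vadd (cmult b c (i - 1) j (cdiff b d i x') y')
               (smult ((-1) ^ i) (cmult b c i (j - 1) x' (cdiff b d j y')))"
    using D x'(1) y'(1) unfolding min_dga_resolution_def by blast
  then have "(\<lambda>s. \<kappa> (cdiff b d (i + j) (cmult b c i j x' y') s)) = (\<lambda>s. \<kappa> (vadd (cmult b c (i - 1) j (cdiff b d i x') y')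
               (smult ((-1) ^ i) (cmult b c i (j - 1) x' (cdiff b d j y'))) s))" by simp
  then show ?thesis by (simp only: hom_cdiff hom_cmult hom_vadd hom_smult k_m1 x'(2) y'(2))
qed

lemma assoc_A: assumes "x \<in> vec (b i)" "y \<in> vec (b j)" "z \<in> vec (b l)"
  shows "cmult b cA (i + j) l (cmult b cA i j x y) z = cmult b cA i (j + l) x (cmult b cA j l y z)"
proof -
  obtain x' where x': "x' \<in> vec (b i)" "(\<lambda>s. \<kappa> (x' s)) = x" using lift assms by blast
  obtain y' where y': "y' \<in> vec (b j)" "(\<lambda>s. \<kappa> (y' s)) = y" using lift assms by blast
  obtain z' where z': "z' \<in> vec (b l)" "(\<lambda>s. \<kappa> (z' s)) = z" using lift assms by blast
  have "cmult b c (i + j) l (cmult b c i j x' y') z' = cmult b c i (j + l) x' (cmult b c j l y' z')"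
    using D x'(1) y'(1) z'(1) unfolding min_dga_resolution_def by blast
  then have "(\<lambda>s. \<kappa> (cmult b c (i + j) l (cmult b c i j x' y') z' s)) = (\<lambda>s. \<kappa> (cmult b c i (j + l) x' (cmult b c j l y' z') s))" by simp
  then show ?thesis by (simp only: hom_cmult x'(2) y'(2) z'(2))
qed

lemma m_ideal: "is_ideal m" and m_ne: "1 \<notin> m"
proof -
  show "is_ideal m" using R_local by (simp add: local_ring_def maximal_ideal_def)
  then show "1 \<notin> m" using R_local is_idealD(3)[of m 1]
    by (auto simp: local_ring_def maximal_ideal_def)
qed

lemma p_ideal: "is_ideal p" using P_local by (simp add: local_ring_def maximal_ideal_def)

lemma m_pre: assumes "r \<in> m" shows "\<exists>x\<in>p. \<kappa> x = r"
proof -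
  obtain x where x: "\<kappa> x = r" using surj by (metis surjD)
  let ?J = "{y. \<kappa> y \<in> m}"
  have J: "is_ideal ?J" using is_idealD[OF m_ideal] by (auto simp: is_ideal_def k_zero k_add k_mult)
  have "p \<subseteq> ?J" using local_hom by auto
  then have "?J = p \<or> ?J = UNIV" using P_local J by (auto simp: local_ring_def maximal_ideal_def)
  moreover have "1 \<notin> ?J" using m_ne k_one by simp
  ultimately have "?J = p" by auto
  then show ?thesis using x assms by auto
qed

lemma mkill: assumes "r \<in> m" "z \<in> vec (b j)" "cdiff b dA j z = vzero"
  shows "smult r z \<in> boundaries b dA j"
proof -
  obtain x where x: "x \<in> p" "\<kappa> x = r" using m_pre assms(1) by blast
  obtain e where e: "e \<in> vec (b 0)" "\<And>j y. y \<in> vec (b j) \<Longrightarrow> cmult b c 0 j e y = y"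
    using D unfolding min_dga_resolution_def by metis
  have "x * e 0 \<in> p" using is_idealD(4)[OF p_ideal x(1)] .
  moreover have "{cdiff b d 1 w 0 |w. w \<in> vec (b 1)} = p" using D unfolding min_dga_resolution_def by blast
  ultimately have "x * e 0 \<in> {cdiff b d 1 w 0 |w. w \<in> vec (b 1)}" by simp
  then have "\<exists>w. w \<in> vec (b 1) \<and> cdiff b d 1 w 0 = x * e 0" by auto
  then obtain w where w: "w \<in> vec (b 1)" "cdiff b d 1 w 0 = x * e 0"
    by blast
  have b0: "b 0 = 1" using D by (simp add: min_dga_resolution_def)
  obtain z' where z': "z' \<in> vec (b j)" "(\<lambda>s. \<kappa> (z' s)) = z" using lift assms by blast
  let ?wA = "\<lambda>s. \<kappa> (w s)" and ?eA = "\<lambda>s. \<kappa> (e s)"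
  have wA: "?wA \<in> vec (b 1)" using w(1) by (auto simp: vec_def k_zero)
  have dw: "cdiff b dA 1 ?wA = smult r ?eA"
  proof
    fix s show "cdiff b dA 1 ?wA s = smult r ?eA s"
    proof (cases "s = 0")
      case True
      have "cdiff b dA 1 ?wA s = \<kappa> (cdiff b d 1 w 0)" using True hom_cdiff[of 1 w] by metis
      then show ?thesis using True w(2) x(2) by (simp add: smult_def k_mult)
    next
      case False
      then show ?thesis using e(1) b0 by (simp add: cdiff_def smult_def vec_def k_zero)
    qed
  qed
  have unit: "cmult b cA 0 j ?eA z = z"
    using hom_cmult[of 0 j e z'] e(2)[OF z'(1)] z'(2) by simp
  have "cdiff b dA (1 + j) (cmult b cA 1 j ?wA z) =
          vadd (cmult b cA (1 - 1) j (cdiff b dA 1 ?wA) z)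
               (smult ((-1) ^ 1) (cmult b cA 1 (j - 1) ?wA (cdiff b dA j z)))"
    by (rule leib_A[OF wA assms(2)])
  also have "\<dots> = smult r z"
  proof -
    have z0: "cmult b cA 1 (j - 1) ?wA (cdiff b dA j z) = vzero"
      unfolding assms(3) vzero_def by (rule cmult_zero_right[unfolded vzero_def])
    show ?thesis unfolding z0 diff_self dw cmult_smult_left unit
      by (simp add: vadd_def smult_def vzero_def unit)
  qed
  finally have "smult r z = cdiff b dA (Suc j) (cmult b cA 1 j ?wA z)" by simp
  moreover have "cmult b cA 1 j ?wA z \<in> vec (b (Suc j))" using cmult_vec[of b cA 1 j] by simp
  ultimately show ?thesis unfolding boundaries_def by blast
qed

end


definition Rm :: "(nat \<Rightarrow> nat) \<Rightarrow> (nat \<Rightarrow> nat \<Rightarrow> nat \<Rightarrow> nat \<Rightarrow> nat \<Rightarrow> 'a::comm_ring_1)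
   \<Rightarrow> ((nat \<times> 'c) list \<Rightarrow> nat \<Rightarrow> 'a) \<Rightarrow> (nat \<times> 'c) list \<Rightarrow> nat \<Rightarrow> 'a" where
  "Rm b c f hs = (\<lambda>s. \<Sum>i\<in>{1..<length hs}.
             cmult b c (mdeg (take i hs)) (mdeg (drop i hs))
               (smult ((-1) ^ (mdeg (take i hs) + 1)) (f (take i hs))) (f (drop i hs)) s)"

lemma mdeg_append: "u \<noteq> [] \<Longrightarrow> v \<noteq> [] \<Longrightarrow> mdeg (u @ v) = mdeg u + mdeg v + 1"
  by (cases u; cases v) (auto simp: mdeg_def)

lemma mdeg_split: assumes "0 < i" "i < length hs"
  shows "mdeg hs = mdeg (take i hs) + mdeg (drop i hs) + 1"
proof -
  have "take i hs \<noteq> []" "drop i hs \<noteq> []" using assms by auto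
  then show ?thesis using mdeg_append[of "take i hs" "drop i hs"] by simp
qed

lemma tri_swap: "(\<Sum>i\<in>{1..<n}. \<Sum>j\<in>{1..<i}. g j i) = (\<Sum>j\<in>{1..<n}. \<Sum>i\<in>{Suc j..<n}. g j i)"
proof -
  have "(\<Sum>i\<in>{1..<n}. \<Sum>j\<in>{j\<in>{1..<n}. j < i}. g j i) = (\<Sum>j\<in>{1..<n}. \<Sum>i\<in>{i\<in>{1..<n}. j < i}. g j i)"
    by (rule sum.swap_restrict) auto
  moreover have "\<And>i. i \<in> {1..<n} \<Longrightarrow> {j\<in>{1..<n}. j < i} = {1..<i}" by auto
  moreover have "\<And>j. j \<in> {1..<n} \<Longrightarrow> {i\<in>{1..<n}. j < i} = {Suc j..<n}" by auto
  ultimately show ?thesis by (metis (no_types, lifting) sum.cong)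
qed

lemma massey_cycle:
  fixes b :: "nat \<Rightarrow> nat" and dd :: "nat \<Rightarrow> nat \<Rightarrow> nat \<Rightarrow> 'a::comm_ring_1"
    and cc :: "nat \<Rightarrow> nat \<Rightarrow> nat \<Rightarrow> nat \<Rightarrow> nat \<Rightarrow> 'a"
    and f :: "(nat \<times> 'c) list \<Rightarrow> nat \<Rightarrow> 'a" and hs :: "(nat \<times> 'c) list"
  assumes leib: "\<And>i j x y. x \<in> vec (b i) \<Longrightarrow> y \<in> vec (b j) \<Longrightarrow>
      cdiff b dd (i + j) (cmult b cc i j x y) = vadd (cmult b cc (i - 1) j (cdiff b dd i x) y)
               (smult ((-1) ^ i) (cmult b cc i (j - 1) x (cdiff b dd j y)))"
    and assoc: "\<And>i j l x y z. x \<in> vec (b i) \<Longrightarrow> y \<in> vec (b j) \<Longrightarrow> z \<in> vec (b l) \<Longrightarrow>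
      cmult b cc (i + j) l (cmult b cc i j x y) z = cmult b cc i (j + l) x (cmult b cc j l y z)"
    and hf: "\<And>w. w \<noteq> [] \<Longrightarrow> length w < length hs \<Longrightarrow> set w \<subseteq> set hs \<Longrightarrow>
      f w \<in> vec (b (mdeg w)) \<and> cdiff b dd (mdeg w) (f w) = Rm b cc f w"
    and len: "2 \<le> length hs"
  shows "cdiff b dd (mdeg hs - 1) (Rm b cc f hs) = vzero"
proof -
  define n where "n = length hs"
  have hsne: "hs \<noteq> []" using len by auto
  define sg :: "(nat \<times> 'c) list \<Rightarrow> 'a" where "sg w = (-1) ^ (mdeg w + 1)" for w
  define Tr where "Tr s a l = cmult b cc (mdeg (take a hs)) (mdeg (drop a (take l hs)) + mdeg (drop l hs))
      (f (take a hs)) (cmult b cc (mdeg (drop a (take l hs))) (mdeg (drop l hs))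
        (f (drop a (take l hs))) (f (drop l hs))) s" for s a l
  have fv: "f w \<in> vec (b (mdeg w))" if "w \<noteq> []" "length w < n" "set w \<subseteq> set hs" for w
    using hf that n_def by blast
  have fd: "cdiff b dd (mdeg w) (f w) = Rm b cc f w" if "w \<noteq> []" "length w < n" "set w \<subseteq> set hs" for w
    using hf that n_def by blast
  have st: "set (take i hs) \<subseteq> set hs" "set (drop i hs) \<subseteq> set hs" "set (drop j (take i hs)) \<subseteq> set hs" for i j
    using set_take_subset set_drop_subset by (metis, metis, metis subset_trans)
  have L1: "cmult b cc (mdeg (take i hs) - 1) (mdeg (drop i hs)) (Rm b cc f (take i hs)) (f (drop i hs)) s
      = (\<Sum>j\<in>{1..<i}. sg (take j hs) * Tr s j i)" if i: "1 \<le> i" "i < n" for i s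
  proof -
    have li: "length (take i hs) = i" using i n_def by simp
    have "cmult b cc (mdeg (take i hs) - 1) (mdeg (drop i hs)) (Rm b cc f (take i hs)) (f (drop i hs)) s
      = (\<Sum>j\<in>{1..<i}. cmult b cc (mdeg (take i hs) - 1) (mdeg (drop i hs))
          (cmult b cc (mdeg (take j (take i hs))) (mdeg (drop j (take i hs)))
            (smult ((-1) ^ (mdeg (take j (take i hs)) + 1)) (f (take j (take i hs)))) (f (drop j (take i hs))))
          (f (drop i hs)) s)"
      unfolding Rm_def cmult_sum_left li by simp
    also have "\<dots> = (\<Sum>j\<in>{1..<i}. sg (take j hs) * Tr s j i)"
    proof (rule sum.cong[OF refl])
      fix j assume j: "j \<in> {1..<i}"
      have tt: "take j (take i hs) = take j hs" using j by (simp add: min_absorb1)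
      have md: "mdeg (take i hs) - 1 = mdeg (take j hs) + mdeg (drop j (take i hs))"
        using mdeg_split[of j "take i hs"] j li tt i n_def by simp
      have v1: "f (take j hs) \<in> vec (b (mdeg (take j hs)))" using fv[of "take j hs"] j i st n_def hsne by auto
      have v2: "f (drop j (take i hs)) \<in> vec (b (mdeg (drop j (take i hs))))"
        using fv[of "drop j (take i hs)"] j i st n_def hsne by auto
      have v3: "f (drop i hs) \<in> vec (b (mdeg (drop i hs)))" using fv[of "drop i hs"] i st n_def hsne by auto
      show "cmult b cc (mdeg (take i hs) - 1) (mdeg (drop i hs))
          (cmult b cc (mdeg (take j (take i hs))) (mdeg (drop j (take i hs)))
            (smult ((-1) ^ (mdeg (take j (take i hs)) + 1)) (f (take j (take i hs)))) (f (drop j (take i hs))))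
          (f (drop i hs)) s = sg (take j hs) * Tr s j i"
        unfolding tt md cmult_smult_left
        by (simp add: smult_def sg_def Tr_def assoc[OF v1 v2 v3])
    qed
    finally show ?thesis .
  qed
  have L2: "cmult b cc (mdeg (take i hs)) (mdeg (drop i hs) - 1) (f (take i hs)) (Rm b cc f (drop i hs)) s
      = (\<Sum>l\<in>{Suc i..<n}. sg (drop i (take l hs)) * Tr s i l)" if i: "1 \<le> i" "i < n" for i s
  proof -
    have li: "length (drop i hs) = n - i" using i n_def by simp
    have "cmult b cc (mdeg (take i hs)) (mdeg (drop i hs) - 1) (f (take i hs)) (Rm b cc f (drop i hs)) s
      = (\<Sum>k\<in>{1..<n-i}. cmult b cc (mdeg (take i hs)) (mdeg (drop i hs) - 1) (f (take i hs))
          (cmult b cc (mdeg (take k (drop i hs))) (mdeg (drop k (drop i hs)))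
            (smult ((-1) ^ (mdeg (take k (drop i hs)) + 1)) (f (take k (drop i hs)))) (f (drop k (drop i hs)))) s)"
      unfolding Rm_def cmult_sum_right li by simp
    also have "\<dots> = (\<Sum>k\<in>{1..<n-i}. sg (drop i (take (k + i) hs)) * Tr s i (k + i))"
    proof (rule sum.cong[OF refl])
      fix k assume k: "k \<in> {1..<n-i}"
      have md: "mdeg (drop i hs) - 1 = mdeg (take k (drop i hs)) + mdeg (drop k (drop i hs))"
        using mdeg_split[of k "drop i hs"] k li by simp
      show "cmult b cc (mdeg (take i hs)) (mdeg (drop i hs) - 1) (f (take i hs))
          (cmult b cc (mdeg (take k (drop i hs))) (mdeg (drop k (drop i hs)))
            (smult ((-1) ^ (mdeg (take k (drop i hs)) + 1)) (f (take k (drop i hs)))) (f (drop k (drop i hs)))) s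
          = sg (drop i (take (k + i) hs)) * Tr s i (k + i)"
        unfolding md cmult_smult_left cmult_smult_right take_drop drop_drop
        by (simp add: smult_def sg_def Tr_def)
    qed
    also have "\<dots> = (\<Sum>l\<in>{Suc i..<n}. sg (drop i (take l hs)) * Tr s i l)"
      using sum.shift_bounds_nat_ivl[of "\<lambda>l. sg (drop i (take l hs)) * Tr s i l" 1 i "n - i"] i
      by simp
    finally show ?thesis .
  qed
  have stepA: "cdiff b dd (mdeg hs - 1) (Rm b cc f hs) s =
      (\<Sum>i\<in>{1..<n}. sg (take i hs) * (\<Sum>j\<in>{1..<i}. sg (take j hs) * Tr s j i)
        + (-1) ^ mdeg (take i hs) * (sg (take i hs) * (\<Sum>l\<in>{Suc i..<n}. sg (drop i (take l hs)) * Tr s i l)))" for s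
  proof -
    have "cdiff b dd (mdeg hs - 1) (Rm b cc f hs) s = (\<Sum>i\<in>{1..<n}. cdiff b dd (mdeg hs - 1)
        (cmult b cc (mdeg (take i hs)) (mdeg (drop i hs))
               (smult (sg (take i hs)) (f (take i hs))) (f (drop i hs))) s)"
      unfolding Rm_def cdiff_sum n_def sg_def by simp
    also have "\<dots> = (\<Sum>i\<in>{1..<n}. sg (take i hs) * (\<Sum>j\<in>{1..<i}. sg (take j hs) * Tr s j i)
        + (-1) ^ mdeg (take i hs) * (sg (take i hs) * (\<Sum>l\<in>{Suc i..<n}. sg (drop i (take l hs)) * Tr s i l)))"
    proof (rule sum.cong[OF refl])
      fix i assume i: "i \<in> {1..<n}"
      have md: "mdeg hs - 1 = mdeg (take i hs) + mdeg (drop i hs)"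
        using mdeg_split[of i hs] i n_def by simp
      have ne: "take i hs \<noteq> []" "drop i hs \<noteq> []" using i n_def by auto
      have v1: "f (take i hs) \<in> vec (b (mdeg (take i hs)))" using fv[of "take i hs"] i st n_def hsne by auto
      have v3: "f (drop i hs) \<in> vec (b (mdeg (drop i hs)))" using fv[of "drop i hs"] i st n_def hsne by auto
      have d1: "cdiff b dd (mdeg (take i hs)) (f (take i hs)) = Rm b cc f (take i hs)"
        using fd[of "take i hs"] i st n_def ne hsne by auto
      have d3: "cdiff b dd (mdeg (drop i hs)) (f (drop i hs)) = Rm b cc f (drop i hs)"
        using fd[of "drop i hs"] i st n_def ne hsne by auto
      show "cdiff b dd (mdeg hs - 1)
        (cmult b cc (mdeg (take i hs)) (mdeg (drop i hs))
               (smult (sg (take i hs)) (f (take i hs))) (f (drop i hs))) s =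
        sg (take i hs) * (\<Sum>j\<in>{1..<i}. sg (take j hs) * Tr s j i)
        + (-1) ^ mdeg (take i hs) * (sg (take i hs) * (\<Sum>l\<in>{Suc i..<n}. sg (drop i (take l hs)) * Tr s i l))"
        unfolding md cmult_smult_left cdiff_smult unfolding leib[OF v1 v3] d1 d3
        using L1[of i s] L2[of i s] i by (simp add: vadd_def smult_def algebra_simps)
    qed
    finally show ?thesis .
  qed
  have coef: "sg (take l hs) * sg (take a hs) = - ((-1) ^ mdeg (take a hs) * sg (take a hs) * sg (drop a (take l hs)))"
    if "1 \<le> a" "a < l" "l < n" for a l
  proof -
    have "mdeg (take l hs) = mdeg (take a hs) + mdeg (drop a (take l hs)) + 1"
      using mdeg_split[of a "take l hs"] that n_def by (simp add: min_absorb1)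
    moreover have sq: "((-1::'a) ^ k) * (-1) ^ k = 1" for k
      by (simp add: power_mult_distrib[symmetric])
    ultimately show ?thesis by (simp add: sg_def power_add mult.commute mult.left_commute)
  qed
  show ?thesis
  proof
    fix s
    have "cdiff b dd (mdeg hs - 1) (Rm b cc f hs) s =
        (\<Sum>i\<in>{1..<n}. \<Sum>j\<in>{1..<i}. sg (take i hs) * sg (take j hs) * Tr s j i)
      + (\<Sum>i\<in>{1..<n}. \<Sum>l\<in>{Suc i..<n}. (-1) ^ mdeg (take i hs) * sg (take i hs) * sg (drop i (take l hs)) * Tr s i l)"
      unfolding stepA sum.distrib sum_distrib_left by (simp add: mult.assoc)
    also have "\<dots> = (\<Sum>a\<in>{1..<n}. \<Sum>l\<in>{Suc a..<n}. sg (take l hs) * sg (take a hs) * Tr s a l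
        + (-1) ^ mdeg (take a hs) * sg (take a hs) * sg (drop a (take l hs)) * Tr s a l)"
      unfolding tri_swap sum.distrib by simp
    also have "\<dots> = 0"
      by (rule sum.neutral, rule ballI, rule sum.neutral) (auto simp: coef)
    finally show "cdiff b dd (mdeg hs - 1) (Rm b cc f hs) s = vzero s" by (simp add: vzero_def)
  qed
qed



lemma bd_zero: "(\<lambda>s. 0) \<in> boundaries b d i"
proof -
  have "cdiff b d (Suc i) (\<lambda>s. 0) = (\<lambda>s. 0)" using cdiff_zero by (simp add: vzero_def)
  moreover have "(\<lambda>s. 0) \<in> vec (b (Suc i))" by (simp add: vec_def)
  ultimately show ?thesis unfolding boundaries_def by (metis image_eqI)
qed

lemma bd_add: "x \<in> boundaries b d i \<Longrightarrow> y \<in> boundaries b d i \<Longrightarrow> vadd x y \<in> boundaries b d i"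
  unfolding boundaries_def by (auto simp: cdiff_vadd[symmetric] intro!: imageI vadd_vec)

lemma bd_smult: "x \<in> boundaries b d i \<Longrightarrow> smult r x \<in> boundaries b d i"
  unfolding boundaries_def by (auto simp: cdiff_smult[symmetric] intro!: imageI smult_vec)

lemma bd_vec: "x \<in> boundaries b d i \<Longrightarrow> x \<in> vec (b i)"
  unfolding boundaries_def using cdiff_vec by blast

lemma bd_lin: "x \<in> boundaries b d i \<Longrightarrow> y \<in> boundaries b d i \<Longrightarrow> (\<lambda>s. r * x s + q * y s) \<in> boundaries b d i"
  using bd_add[OF bd_smult[of x b d i r] bd_smult[of y b d i q]] by (simp add: vadd_def smult_def)

lemma bd_eq: "x \<in> boundaries b d i \<Longrightarrow> x = y \<Longrightarrow> y \<in> boundaries b d i" by simp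

context gsetup begin

lemma class_mem: assumes "hclass b dA i C" "z \<in> C"
  shows "z \<in> vec (b i)" "cdiff b dA i z = vzero" "C = vadd z ` boundaries b dA i"
proof -
  obtain z0 where z0: "z0 \<in> vec (b i)" "cdiff b dA i z0 = vzero" "C = vadd z0 ` boundaries b dA i"
    using assms(1) unfolding hclass_def by blast
  obtain w where w: "w \<in> boundaries b dA i" "z = vadd z0 w" using assms(2) z0(3) by blast
  obtain w' where w': "w' \<in> vec (b (Suc i))" "w = cdiff b dA (Suc i) w'" using w(1) unfolding boundaries_def by blast
  show "z \<in> vec (b i)" using w(2) z0(1) bd_vec[OF w(1)] by (simp add: vadd_vec)
  show "cdiff b dA i z = vzero" unfolding w(2) w'(2) cdiff_vadd z0(2) dd_A[OF w'(1)]
    by (simp add: vadd_def vzero_def)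
  show "C = vadd z ` boundaries b dA i"
  proof
    show "C \<subseteq> vadd z ` boundaries b dA i"
    proof
      fix y assume "y \<in> C"
      then obtain u where u: "u \<in> boundaries b dA i" "y = vadd z0 u" using z0(3) by blast
      have "(\<lambda>s. 1 * u s + (-1) * w s) \<in> boundaries b dA i" using bd_lin[OF u(1) w(1)] .
      moreover have "y = vadd z (\<lambda>s. 1 * u s + (-1) * w s)" using u(2) w(2) by (auto simp: vadd_def)
      ultimately show "y \<in> vadd z ` boundaries b dA i" by blast
    qed
    show "vadd z ` boundaries b dA i \<subseteq> C"
    proof
      fix y assume "y \<in> vadd z ` boundaries b dA i"
      then obtain u where u: "u \<in> boundaries b dA i" "y = vadd z u" by blast
      have "(\<lambda>s. 1 * u s + 1 * w s) \<in> boundaries b dA i" using bd_lin[OF u(1) w(1)] .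
      moreover have "y = vadd z0 (\<lambda>s. 1 * u s + 1 * w s)" using u(2) w(2) by (auto simp: vadd_def)
      ultimately show "y \<in> C" using z0(3) by blast
    qed
  qed
qed

lemma unit_mod: assumes "r \<notin> m" shows "\<exists>q. q * r - 1 \<in> m"
proof -
  let ?J = "{x + y * r | x y. x \<in> m}"
  have J: "is_ideal ?J"
    unfolding is_ideal_def
  proof (intro conjI allI ballI impI)
    have "(0::'r) = 0 + 0 * r" by simp
    then show "0 \<in> ?J" using is_idealD(1)[OF m_ideal] by blast
    fix u v assume "u \<in> ?J" "v \<in> ?J"
    then obtain x y x' y' where "u = x + y * r" "v = x' + y' * r" "x \<in> m" "x' \<in> m" by blast
    moreover have "x + x' \<in> m" using is_idealD(2)[OF m_ideal] \<open>x \<in> m\<close> \<open>x' \<in> m\<close> by blast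
    ultimately have "u + v = (x + x') + (y + y') * r \<and> x + x' \<in> m" by (simp add: algebra_simps)
    then show "u + v \<in> ?J" by blast
  next
    fix q u assume "u \<in> ?J"
    then obtain x y where "u = x + y * r" "x \<in> m" by blast
    moreover have "q * x \<in> m" using is_idealD(3)[OF m_ideal] \<open>x \<in> m\<close> by blast
    ultimately have "q * u = q * x + (q * y) * r \<and> q * x \<in> m" by (simp add: algebra_simps)
    then show "q * u \<in> ?J" by blast
  qed
  have "m \<subseteq> ?J" by (force intro: exI[of _ 0])
  moreover have "r \<in> ?J" using is_idealD(1)[OF m_ideal] by (force intro: exI[of _ 0] exI[of _ 1])
  moreover have "\<forall>J. is_ideal J \<and> m \<subseteq> J \<longrightarrow> J = m \<or> J = UNIV"
    using R_local by (simp add: local_ring_def maximal_ideal_def)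
  ultimately have "?J = m \<or> ?J = UNIV" using J by blast
  then have "?J = UNIV" using \<open>r \<in> ?J\<close> assms by blast
  then obtain x y where "1 = x + y * r" "x \<in> m" by blast
  then have "y * r - 1 = - x" by (simp add: algebra_simps)
  then show ?thesis using is_idealD(5)[OF m_ideal \<open>x \<in> m\<close>] by metis
qed

end


context gsetup begin

lemma hbasis_exists: "\<exists>H. hbasis b dA m H"
proof -
  let ?B = "boundaries b dA"
  define indep where "indep S \<longleftrightarrow> (\<forall>i F r zs. finite F \<and> F \<subseteq> {h\<in>S. fst h = i} \<and> (\<forall>h\<in>F. zs h \<in> snd h) \<and>
        (\<lambda>s. \<Sum>h\<in>F. r h * zs h s) \<in> ?B i \<longrightarrow> (\<forall>h\<in>F. r h \<in> m))" for S
  define Cand where "Cand = {h. fst h \<ge> 1 \<and> hclass b dA (fst h) (snd h)}"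
  define AA where "AA = {S. S \<subseteq> Cand \<and> indep S}"
  have "\<exists>S\<in>AA. \<forall>X\<in>AA. S \<subseteq> X \<longrightarrow> X = S"
  proof (rule subset_Zorn')
    fix C assume C: "subset.chain AA C"
    show "\<Union>C \<in> AA"
    proof (cases "C = {}")
      case True then show ?thesis by (auto simp: AA_def indep_def)
    next
      case False
      have sub: "\<Union>C \<subseteq> Cand" using C by (auto simp: AA_def subset_chain_def)
      have "indep (\<Union>C)" unfolding indep_def
      proof (intro allI impI)
        fix i F r zs assume a: "finite F \<and> F \<subseteq> {h\<in>\<Union>C. fst h = i} \<and> (\<forall>h\<in>F. zs h \<in> snd h) \<and>
            (\<lambda>s. \<Sum>h\<in>F. r h * zs h s) \<in> ?B i"
        then have "F \<subseteq> \<Union>C" by auto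
        then obtain S where S: "S \<in> C" "F \<subseteq> S" using finite_subset_Union_chain[OF _ _ False C] a by blast
        have "indep S" using S(1) C by (auto simp: AA_def subset_chain_def)
        moreover have "F \<subseteq> {h\<in>S. fst h = i}" using a S(2) by auto
        ultimately show "\<forall>h\<in>F. r h \<in> m" using a unfolding indep_def by blast
      qed
      then show ?thesis using sub by (simp add: AA_def)
    qed
  qed
  then obtain S where S: "S \<in> AA" "\<And>X. X \<in> AA \<Longrightarrow> S \<subseteq> X \<Longrightarrow> X = S" by blast
  have SC: "S \<subseteq> Cand" and Si: "indep S" using S(1) by (auto simp: AA_def)
  have span: "\<exists>F r zs. finite F \<and> F \<subseteq> {h\<in>S. fst h = i} \<and> (\<forall>h\<in>F. zs h \<in> snd h) \<and>
           vsub z (\<lambda>s. \<Sum>h\<in>F. r h * zs h s) \<in> ?B i"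
    if i: "i \<ge> 1" "z \<in> vec (b i)" "cdiff b dA i z = vzero" for i z
  proof (rule ccontr)
    assume ns: "\<not> ?thesis"
    define h0 where "h0 = (i, vadd z ` ?B i)"
    have "z = vadd z (\<lambda>s. 0)" by (simp add: vadd_def)
    then have zh0: "z \<in> snd h0" unfolding h0_def using bd_zero by force
    have h0C: "h0 \<in> Cand" using i unfolding Cand_def h0_def hclass_def by auto
    have h0S: "h0 \<notin> S"
    proof
      assume "h0 \<in> S"
      then have "finite {h0} \<and> {h0} \<subseteq> {h\<in>S. fst h = i} \<and> (\<forall>h\<in>{h0}. (\<lambda>_. z) h \<in> snd h)"
        using zh0 by (simp add: h0_def)
      moreover have "vsub z (\<lambda>s. \<Sum>h\<in>{h0}. 1 * (\<lambda>_. z) h s) \<in> ?B i"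
        using bd_zero by (simp add: vsub_def)
      ultimately have "\<exists>F r zs. finite F \<and> F \<subseteq> {h\<in>S. fst h = i} \<and> (\<forall>h\<in>F. zs h \<in> snd h) \<and>
           vsub z (\<lambda>s. \<Sum>h\<in>F. r h * zs h s) \<in> ?B i"
        by (intro exI[of _ "{h0}"] exI[of _ "\<lambda>_. 1"] exI[of _ "\<lambda>_. z"]) simp
      then show False using ns by (rule notE[rotated])
    qed
    have "indep (insert h0 S)" unfolding indep_def
    proof (intro allI impI)
      fix i' F r zs
      assume a: "finite F \<and> F \<subseteq> {h \<in> insert h0 S. fst h = i'} \<and> (\<forall>h\<in>F. zs h \<in> snd h) \<and>
          (\<lambda>s. \<Sum>h\<in>F. r h * zs h s) \<in> ?B i'"
      show "\<forall>h\<in>F. r h \<in> m"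
      proof (cases "h0 \<in> F")
        case False
        then have "F \<subseteq> {h\<in>S. fst h = i'}" using a by auto
        then show ?thesis using Si a unfolding indep_def by blast
      next
        case True
        have ii: "i' = i" using True a h0_def by auto
        define F' where "F' = F - {h0}"
        have F'S: "F' \<subseteq> {h\<in>S. fst h = i}" "finite F'" using a ii by (auto simp: F'_def)
        have zsF': "\<forall>h\<in>F'. zs h \<in> snd h" using a by (auto simp: F'_def)
        have hc: "hclass b dA i (snd h0)" using h0C by (simp add: Cand_def h0_def)
        have zin: "zs h0 \<in> snd h0" using a True by blast
        have zs0: "zs h0 \<in> vec (b i)" "cdiff b dA i (zs h0) = vzero"
          using class_mem[OF hc zin] by auto
        have sumsplit: "(\<lambda>s. \<Sum>h\<in>F. r h * zs h s) = (\<lambda>s. r h0 * zs h0 s + (\<Sum>h\<in>F'. r h * zs h s))"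
          using True a by (simp add: F'_def sum.remove)
        have sumB: "(\<lambda>s. r h0 * zs h0 s + (\<Sum>h\<in>F'. r h * zs h s)) \<in> ?B i" using a ii sumsplit by simp
        show ?thesis
        proof (cases "r h0 \<in> m")
          case True
          have k: "smult (r h0) (zs h0) \<in> ?B i" by (rule mkill[OF True zs0(1,2)])
          have "(\<lambda>s. 1 * (r h0 * zs h0 s + (\<Sum>h\<in>F'. r h * zs h s)) + (-1) * smult (r h0) (zs h0) s) \<in> ?B i"
            by (rule bd_lin[OF sumB k])
          then have "(\<lambda>s. \<Sum>h\<in>F'. r h * zs h s) \<in> ?B i" by (simp add: smult_def)
          then have "\<forall>h\<in>F'. r h \<in> m" using Si F'S zsF' unfolding indep_def by blast
          then show ?thesis using True by (auto simp: F'_def)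
        next
          case False
          obtain q where q: "q * r h0 - 1 \<in> m" using unit_mod[OF False] by blast
          have k: "smult (q * r h0 - 1) (zs h0) \<in> ?B i" by (rule mkill[OF q zs0(1,2)])
          obtain u where u: "u \<in> ?B i" "zs h0 = vadd z u" using zin unfolding h0_def by auto
          have zz: "vsub z (zs h0) \<in> ?B i"
          proof -
            have "smult (-1) u \<in> ?B i" by (rule bd_smult[OF u(1)])
            moreover have "smult (-1) u = vsub z (zs h0)" using u(2) by (auto simp: smult_def vsub_def vadd_def)
            ultimately show ?thesis by simp
          qed
          have "(\<lambda>s. q * (r h0 * zs h0 s + (\<Sum>h\<in>F'. r h * zs h s)) + 1 * (\<lambda>s. 1 * vsub z (zs h0) s + (-1) * smult (q * r h0 - 1) (zs h0) s) s) \<in> ?B i"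
            by (rule bd_lin[OF sumB bd_lin[OF zz k]])
          moreover have "(\<lambda>s. q * (r h0 * zs h0 s + (\<Sum>h\<in>F'. r h * zs h s)) + 1 * (\<lambda>s. 1 * vsub z (zs h0) s + (-1) * smult (q * r h0 - 1) (zs h0) s) s)
              = vsub z (\<lambda>s. \<Sum>h\<in>F'. (- q * r h) * zs h s)"
          proof
            fix s
            have "(\<Sum>h\<in>F'. (- q * r h) * zs h s) = - (q * (\<Sum>h\<in>F'. r h * zs h s))"
              by (simp add: sum_distrib_left sum_negf mult.assoc)
            then show "q * (r h0 * zs h0 s + (\<Sum>h\<in>F'. r h * zs h s)) + 1 * (\<lambda>s. 1 * vsub z (zs h0) s + (-1) * smult (q * r h0 - 1) (zs h0) s) s
              = vsub z (\<lambda>s. \<Sum>h\<in>F'. (- q * r h) * zs h s) s"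
              by (simp add: vsub_def smult_def algebra_simps)
          qed
          ultimately have "vsub z (\<lambda>s. \<Sum>h\<in>F'. (\<lambda>h. - q * r h) h * zs h s) \<in> ?B i" by simp
          then have "\<exists>F r zs. finite F \<and> F \<subseteq> {h\<in>S. fst h = i} \<and> (\<forall>h\<in>F. zs h \<in> snd h) \<and>
           vsub z (\<lambda>s. \<Sum>h\<in>F. r h * zs h s) \<in> ?B i"
            using F'S zsF' by (intro exI[of _ F'] exI[of _ "\<lambda>h. - q * r h"] exI[of _ zs]) simp
          then show ?thesis using ns by (rule notE[rotated])
        qed
      qed
    qed
    then have "insert h0 S \<in> AA" using SC h0C by (simp add: AA_def)
    then have "insert h0 S = S" using S(2) by blast
    then show False using h0S by blast
  qed
  have "hbasis b dA m S"
    unfolding hbasis_def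
  proof (intro conjI)
    show "\<forall>h\<in>S. 1 \<le> fst h \<and> hclass b dA (fst h) (snd h)" using SC by (auto simp: Cand_def)
    show "\<forall>i F r zs. finite F \<and> F \<subseteq> {h \<in> S. fst h = i} \<and> (\<forall>h\<in>F. zs h \<in> snd h) \<and>
        (\<lambda>s. \<Sum>h\<in>F. r h * zs h s) \<in> ?B i \<longrightarrow> (\<forall>h\<in>F. r h \<in> m)" using Si by (simp add: indep_def)
    show "\<forall>i\<ge>1. \<forall>z\<in>vec (b i). cdiff b dA i z = vzero \<longrightarrow>
        (\<exists>F r zs. finite F \<and> F \<subseteq> {h \<in> S. fst h = i} \<and> (\<forall>h\<in>F. zs h \<in> snd h) \<and>
           vsub z (\<lambda>s. \<Sum>h\<in>F. r h * zs h s) \<in> ?B i)" using span by blast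
  qed
  then show ?thesis by blast
qed

end


lemma Rm_cong: "(\<And>ys. length ys < length hs \<Longrightarrow> f ys = g ys) \<Longrightarrow> Rm b c f hs = Rm b c g hs"
  unfolding Rm_def by (intro ext sum.cong refl) auto

context gsetup begin

lemma massey_construct:
  assumes a_pos: "a > 0" and cond1: "tor_cond1 b dA m a" and cond2: "tor_cond2 b dA m a"
    and H: "hbasis b dA m H"
  shows "\<exists>\<mu>. trivial_massey b dA cA m H \<mu> \<and> (\<forall>hs. hs \<noteq> [] \<and> set hs \<subseteq> H \<longrightarrow> (\<forall>s. \<mu> hs s \<in> ideal_pow m a))"
proof -
  define P1 where "P1 h z \<longleftrightarrow> z \<in> snd h \<and> z \<in> vec (b (fst h)) \<and> (\<forall>s. z s \<in> ideal_pow m a)" for h z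
  define pick1 where "pick1 h = (SOME z. P1 h z)" for h
  define Q where "Q f hs w \<longleftrightarrow> w \<in> vec (b (mdeg hs)) \<and> (\<forall>s. w s \<in> ideal_pow m a) \<and>
      cdiff b dA (mdeg hs) w = Rm b cA f hs" for f :: "(nat \<times> (nat \<Rightarrow> 'r) set) list \<Rightarrow> nat \<Rightarrow> 'r" and hs w
  define G where "G f hs = (if hs = [] then vzero else if length hs = 1 then pick1 (hd hs)
      else (SOME w. Q f hs w))" for f :: "(nat \<times> (nat \<Rightarrow> 'r) set) list \<Rightarrow> nat \<Rightarrow> 'r" and hs
  define z0 :: "(nat \<times> (nat \<Rightarrow> 'r) set) list \<Rightarrow> nat \<Rightarrow> 'r" where "z0 = (\<lambda>_. vzero)"
  define \<mu> where "\<mu> hs = (G ^^ length hs) z0 hs" for hs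
  have Gloc: "G f hs = G g hs" if "\<And>ys. length ys < length hs \<Longrightarrow> f ys = g ys" for f g hs
    unfolding G_def Q_def using Rm_cong[of hs f g, OF that] by simp
  have it: "(G ^^ k) z0 hs = (G ^^ Suc k) z0 hs" if "length hs \<le> k" for k hs
    using that
  proof (induction k arbitrary: hs)
    case 0
    then show ?case by (simp add: G_def z0_def)
  next
    case (Suc k)
    have "G ((G ^^ k) z0) hs = G ((G ^^ Suc k) z0) hs"
      by (rule Gloc) (use Suc in auto)
    then show ?case by simp
  qed
  have stab: "(G ^^ k) z0 hs = \<mu> hs" if "length hs \<le> k" for k hs
    using that
  proof (induction k rule: dec_induct)
    case base then show ?case by (simp add: \<mu>_def)
  next
    case (step k) then show ?case using it[of hs k] by simp
  qed
  have fixp: "\<mu> hs = G \<mu> hs" for hs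
  proof (cases hs)
    case Nil then show ?thesis by (simp add: \<mu>_def G_def z0_def)
  next
    case (Cons x xs)
    have "\<mu> hs = G ((G ^^ length xs) z0) hs" using Cons by (simp add: \<mu>_def)
    also have "\<dots> = G \<mu> hs" by (rule Gloc) (use Cons stab in auto)
    finally show ?thesis .
  qed
  have mi: "is_ideal (ideal_pow m a)" by (rule ideal_pow_ideal)
  define good where "good hs \<longleftrightarrow> \<mu> hs \<in> vec (b (mdeg hs)) \<and> (\<forall>s. \<mu> hs s \<in> ideal_pow m a) \<and>
      cdiff b dA (mdeg hs) (\<mu> hs) = Rm b cA \<mu> hs \<and> (length hs = 1 \<longrightarrow> \<mu> hs \<in> snd (hd hs))" for hs
  have allgood: "hs \<noteq> [] \<Longrightarrow> set hs \<subseteq> H \<Longrightarrow> good hs" for hs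
  proof (induction "length hs" arbitrary: hs rule: less_induct)
    case less
    show ?case
    proof (cases "length hs = 1")
      case True
      then obtain h where hs: "hs = [h]" by (cases hs) auto
      have hH: "h \<in> H" using less.prems hs by auto
      have i1: "fst h \<ge> 1" "hclass b dA (fst h) (snd h)" using H hH by (auto simp: hbasis_def)
      obtain z where z: "z \<in> vec (b (fst h))" "cdiff b dA (fst h) z = vzero" "snd h = vadd z ` boundaries b dA (fst h)"
        using i1(2) unfolding hclass_def by blast
      obtain w where w: "w \<in> vec (b (Suc (fst h)))" "\<forall>s. z s - cdiff b dA (Suc (fst h)) w s \<in> ideal_pow m a"
      proof -
        have "fst h > 0" using i1(1) by simp
        then show ?thesis using that cond1 z(1,2) unfolding tor_cond1_def by blast
      qed
      let ?z = "vadd z (cdiff b dA (Suc (fst h)) (smult (-1) w))"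
      have "cdiff b dA (Suc (fst h)) (smult (-1) w) \<in> boundaries b dA (fst h)"
        unfolding boundaries_def using smult_vec[OF w(1)] by blast
      then have m1: "?z \<in> snd h" using z(3) by blast
      have m2: "?z \<in> vec (b (fst h))" by (rule vadd_vec[OF z(1) cdiff_vec[of b dA "fst h"]])
      have eq: "?z = (\<lambda>s. z s - cdiff b dA (Suc (fst h)) w s)"
        unfolding cdiff_smult by (simp add: vadd_def smult_def)
      have "P1 h ?z" unfolding P1_def using m1 m2 w(2) eq by simp
      then have p: "P1 h (pick1 h)" unfolding pick1_def by (rule someI[of "P1 h"])
      have mu: "\<mu> hs = pick1 h" using fixp[of hs] hs by (simp add: G_def)
      have md: "mdeg hs = fst h" using hs by (simp add: mdeg_def)
      have cyc: "cdiff b dA (fst h) (pick1 h) = vzero" using class_mem(2)[OF i1(2)] p by (simp add: P1_def)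
      have "Rm b cA \<mu> hs = vzero" using hs by (simp add: Rm_def vzero_def)
      then show ?thesis unfolding good_def mu md using p cyc hs by (simp add: P1_def)
    next
      case False
      then have len: "2 \<le> length hs" using less.prems by (cases hs) (auto simp: Suc_le_eq)
      have IH: "good w" if "w \<noteq> []" "length w < length hs" "set w \<subseteq> set hs" for w
        using less.hyps[OF that(2) that(1)] that less.prems by auto
      have cyc: "cdiff b dA (mdeg hs - 1) (Rm b cA \<mu> hs) = vzero"
        by (rule massey_cycle[OF leib_A assoc_A]) (use IH len in \<open>auto simp: good_def\<close>)
      have mdpos: "mdeg hs \<ge> 1" using len by (simp add: mdeg_def)
      have ent: "Rm b cA \<mu> hs s \<in> ideal_pow m (2 * a)" for s
        unfolding Rm_def cmult_def
      proof (rule ideal_sum[OF ideal_pow_ideal], goal_cases)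
        case (1 i)
        have i: "1 \<le> i" "i < length hs" using 1 by auto
        have g1: "\<forall>s. \<mu> (take i hs) s \<in> ideal_pow m a" using IH[of "take i hs"] i len less.prems
          by (auto simp: good_def dest: subsetD[OF set_take_subset])
        have g2: "\<forall>s. \<mu> (drop i hs) s \<in> ideal_pow m a" using IH[of "drop i hs"] i len less.prems
          by (auto simp: good_def dest: subsetD[OF set_drop_subset])
        show ?case
        proof (cases "b (mdeg (take i hs) + mdeg (drop i hs)) \<le> s")
          case True then show ?thesis using is_idealD(1)[OF ideal_pow_ideal] by simp
        next
          case False
          have "cA (mdeg (take i hs)) (mdeg (drop i hs)) s' t s * smult ((- 1) ^ (mdeg (take i hs) + 1)) (\<mu> (take i hs)) s' *
              \<mu> (drop i hs) t \<in> ideal_pow m (2 * a)" for s' t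
          proof -
            have "cA (mdeg (take i hs)) (mdeg (drop i hs)) s' t s * smult ((- 1) ^ (mdeg (take i hs) + 1)) (\<mu> (take i hs)) s'
                \<in> ideal_pow m a"
            proof -
              have e: "cA (mdeg (take i hs)) (mdeg (drop i hs)) s' t s * smult ((- 1) ^ (mdeg (take i hs) + 1)) (\<mu> (take i hs)) s'
                = (cA (mdeg (take i hs)) (mdeg (drop i hs)) s' t s * (- 1) ^ (mdeg (take i hs) + 1)) * \<mu> (take i hs) s'"
                by (simp only: smult_def mult.assoc)
              show ?thesis unfolding e by (rule is_idealD(3)[OF mi g1[rule_format]])
            qed
            then show ?thesis using ideal_pow_mult[OF m_ideal _ g2[rule_format, of t]] by (simp add: mult_2)
          qed
          then show ?thesis using False
            by (simp add: ideal_sum[OF ideal_pow_ideal])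
        qed
      qed
      have zvec: "Rm b cA \<mu> hs \<in> vec (b (mdeg hs - 1))"
        unfolding vec_def
      proof (intro CollectI allI impI)
        fix s assume s: "b (mdeg hs - 1) \<le> s"
        show "Rm b cA \<mu> hs s = 0" unfolding Rm_def
        proof (rule sum.neutral, rule ballI)
          fix i assume "i \<in> {1..<length hs}"
          then have "mdeg hs - 1 = mdeg (take i hs) + mdeg (drop i hs)" using mdeg_split[of i hs] by simp
          then show "cmult b cA (mdeg (take i hs)) (mdeg (drop i hs))
               (smult ((- 1) ^ (mdeg (take i hs) + 1)) (\<mu> (take i hs))) (\<mu> (drop i hs)) s = 0"
            using s by (simp add: cmult_def)
        qed
      qed
      obtain w where w: "w \<in> vec (b (Suc (mdeg hs - 1)))" "\<forall>s. w s \<in> ideal_pow m a"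
          "cdiff b dA (Suc (mdeg hs - 1)) w = Rm b cA \<mu> hs"
        using cond2 zvec ent cyc unfolding tor_cond2_def by blast
      have "Q \<mu> hs w" using w mdpos by (simp add: Q_def)
      then have q: "Q \<mu> hs (SOME w. Q \<mu> hs w)" by (rule someI[of "Q \<mu> hs"])
      have mu: "\<mu> hs = (SOME w. Q \<mu> hs w)" using fixp[of hs] False less.prems by (simp add: G_def)
      have q2: "Q \<mu> hs (\<mu> hs)" using q mu by simp
      show ?thesis using q2 False unfolding good_def Q_def by simp
    qed
  qed
  have "trivial_massey b dA cA m H \<mu>"
    unfolding trivial_massey_def
  proof (intro conjI allI ballI impI)
    fix hs assume "hs \<noteq> [] \<and> set hs \<subseteq> H"
    then have g: "good hs" using allgood by blast
    then show "\<mu> hs \<in> vec (b (mdeg hs))" by (simp add: good_def)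
    fix s show "\<mu> hs s \<in> m" using g ideal_pow_sub[OF m_ideal a_pos] by (auto simp: good_def)
  next
    fix h assume "h \<in> H"
    then show "\<mu> [h] \<in> snd h" using allgood[of "[h]"] by (simp add: good_def)
  next
    fix hs assume a: "2 \<le> length hs \<and> set hs \<subseteq> H"
    then have "hs \<noteq> []" by auto
    then have "good hs" using allgood a by blast
    then show "cdiff b dA (mdeg hs) (\<mu> hs) =
          (\<lambda>s. \<Sum>i\<in>{1..<length hs}.
             cmult b cA (mdeg (take i hs)) (mdeg (drop i hs))
               (smult ((-1) ^ (mdeg (take i hs) + 1)) (\<mu> (take i hs))) (\<mu> (drop i hs)) s)"
      by (simp add: good_def Rm_def)
  qed
  moreover have "\<forall>hs. hs \<noteq> [] \<and> set hs \<subseteq> H \<longrightarrow> (\<forall>s. \<mu> hs s \<in> ideal_pow m a)"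
    using allgood by (auto simp: good_def)
  ultimately show ?thesis by blast
qed

end


theorem lemma1p2:
  fixes \<kappa> :: "'p::comm_ring_1 \<Rightarrow> 'r::comm_ring_1"
    and p :: "'p set" and m :: "'r set"
    and b :: "nat \<Rightarrow> nat"
    and d :: "nat \<Rightarrow> nat \<Rightarrow> nat \<Rightarrow> 'p"
    and c :: "nat \<Rightarrow> nat \<Rightarrow> nat \<Rightarrow> nat \<Rightarrow> nat \<Rightarrow> 'p"
    and a :: nat
  assumes P_local: "local_ring p"
    and R_local: "local_ring m"
    and hom: "ring_hom \<kappa>"
    and surj: "surj \<kappa>"
    and local_hom: "\<kappa> ` p \<subseteq> m"
    and D: "min_dga_resolution p b d c"
    and a_pos: "a > 0"
    and cond1: "tor_cond1 b (\<lambda>i s t. \<kappa> (d i s t)) m a"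
    and cond2: "tor_cond2 b (\<lambda>i s t. \<kappa> (d i s t)) m a"
  shows "golod b (\<lambda>i s t. \<kappa> (d i s t)) (\<lambda>i j s t u. \<kappa> (c i j s t u)) m \<and>
    (\<forall>H. hbasis b (\<lambda>i s t. \<kappa> (d i s t)) m H \<longrightarrow>
      (\<exists>\<mu>. trivial_massey b (\<lambda>i s t. \<kappa> (d i s t)) (\<lambda>i j s t u. \<kappa> (c i j s t u)) m H \<mu> \<and>
           (\<forall>hs. hs \<noteq> [] \<and> set hs \<subseteq> H \<longrightarrow> (\<forall>s. \<mu> hs s \<in> ideal_pow m a))))"
proof -
  interpret gsetup \<kappa> p m b d c
    using P_local R_local hom surj local_hom D by unfold_locales
  obtain H where H: "hbasis b (\<lambda>i s t. \<kappa> (d i s t)) m H" using hbasis_exists by blast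
  have all: "\<forall>H. hbasis b (\<lambda>i s t. \<kappa> (d i s t)) m H \<longrightarrow>
      (\<exists>\<mu>. trivial_massey b (\<lambda>i s t. \<kappa> (d i s t)) (\<lambda>i j s t u. \<kappa> (c i j s t u)) m H \<mu> \<and>
           (\<forall>hs. hs \<noteq> [] \<and> set hs \<subseteq> H \<longrightarrow> (\<forall>s. \<mu> hs s \<in> ideal_pow m a)))"
    using massey_construct[OF a_pos cond1 cond2] by blast
  then have "golod b (\<lambda>i s t. \<kappa> (d i s t)) (\<lambda>i j s t u. \<kappa> (c i j s t u)) m"
    using H unfolding golod_def by blast
  then show ?thesis using all by blast
qed

end
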